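(* Let $\mathcal{D}_{ES}=\{(\alpha,\kappa):0<\alpha<1,\ \kappa>0\}$ and $\mathcal{D}_{LS}=\{(\mathbb{W},\hat\kappa):\mathbb{W}\in\mathbb{R},\ \hat\kappa>0\}$, and define $\mathcal{H}^*_{ES}=\{\mathcal{P}^*_0:\mathcal{P}^*_0 \text{ solves } \text{EW-ES}_{t_0}(\alpha,\kappa)\text{ for some }(\alpha,\kappa)\in\mathcal{D}_{ES}\}$ and $\mathcal{H}^*_{LS}=\{\mathcal{P}^*_0:\mathcal{P}^*_0 \text{ solves } \text{EW-LS}_{t_0}(\mathbb{W},\hat\kappa)\text{ for some }(\mathbb{W},\hat\kappa)\in\mathcal{D}_{LS}\}$. Then $\mathcal{H}^*_{ES}\subseteq\mathcal{H}^*_{LS}$.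
   Context: Decumulation problem on horizon $[0,T]$. Two assets: a stock index and a bond index; $S_t$, $B_t$ denote the real amounts invested, $W_t=S_t+B_t$. Between rebalancing times they evolve without control as jump diffusions $\frac{dS_t}{S_{t^-}}=(\mu^s-\lambda^s\gamma^s)dt+\sigma^s dZ^s+d\big(\sum_{i=1}^{\pi^s_t}(\xi^s_i-1)\big)$, $\frac{dB_t}{B_{t^-}}=(\mu^b-\lambda^b\gamma^b+\mu^b_c\mathbf 1_{\{B_{t^-}<0\}})dt+\sigma^b dZ^b+d\big(\sum_{i=1}^{\pi^b_t}(\xi^b_i-1)\big)$, where $\pi^s,\pi^b$ are Poisson processes with intensities $\lambda^s,\lambda^b$, $\log\xi^{s},\log\xi^b$ are i.i.d. double-exponential jump sizes, $\gamma^{s}=E[\xi^s-1]$, $\gamma^b=E[\xi^b-1]$, $dZ^s dZ^b=\rho_{sb}dt$, and the jump processes are independent of each other and of the Brownian motions. Rebalancing times $t_0=0<t_1<\dots<t_M=T$, equally spaced. At each $t_i$ the investor withdraws $\mathfrak{q}_i$, so $W(t_i^+)=W(t_i^-)-\mathfrak{q}_i$, then sets $S(t_i^+)=\mathfrak{p}_iW(t_i^+)$, $B(t_i^+)=(1-\mathfrak{p}_i)W(t_i^+)$. Controls $(\mathfrak{q}_i,\mathfrak{p}_i)$ are feedback functions of the state $(S(t_i^-),B(t_i^-))$ and $t_i$. Admissibility: for $i<M$, $\mathfrak{q}_i\in[\mathfrak{q}_{\min},\mathfrak{q}_{\max}]$ if $W_i^-\ge\mathfrak{q}_{\max}$ and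 $\mathfrak{q}_i\in[\mathfrak{q}_{\min},\max(\mathfrak{q}_{\min},W_i^-)]$ if $W_i^-<\mathfrak{q}_{\max}$; $\mathfrak{q}_M=0$; $\mathfrak{p}_i\in[0,1]$ if $W_i^+>0$ and $i<M$, $\mathfrak{p}_i=0$ if $W_i^+\le 0$ or $i=M$. $\mathcal{A}$ is the set of admissible controls $\mathcal{P}_0=\{(\mathfrak{q}_i,\mathfrak{p}_i)\}_{i=0}^M$. $E_{\mathcal{P}_0}^{(s,b),t_0^-}$ is expectation under control $\mathcal{P}_0$ given initial state $(S(t_0^-),B(t_0^-))=(s,b)$; $W_T$ is terminal wealth; $\epsilon$ is a fixed real stabilization constant. $\text{EW-LS}_{t_0}(\mathbb{W},\hat\kappa)$: $\sup_{\mathcal{P}_0\in\mathcal{A}} E_{\mathcal{P}_0}^{(s,b),t_0^-}\big[\sum_{i=0}^M\mathfrak{q}_i+\hat\kappa\min(W_T-\mathbb{W},0)+\epsilon W_T\big]$. $\text{EW-ES}_{t_0}(\alpha,\kappa)$: $\sup_{\mathcal{P}_0\in\mathcal{A}} E_{\mathcal{P}_0}^{(s,b),t_0^-}\big[\sum_{i=0}^M\mathfrak{q}_i+\kappa\sup_{W'}\big(W'+\tfrac1\alpha\min(W_T-W',0)\big)+\epsilon W_T\big]$, equivalently $\sup_{W'}\sup_{\mathcal{P}_0}E[\sum\mathfrak{q}_i+\kappa(W'+\tfrac1\alpha\min(W_T-W',0))+\epsilon W_T]$; for each $(\alpha,\kappa)$ the maximizing $W'$ (denoted $\mathbb{W}^*$)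 is assumed to exist. *)

theory Defs
  imports "HOL-Probability.Probability"
begin

(* Abstract decumulation model: M is the underlying probability space (initial
   state (s,b) at t_0^- fixed), A the set of admissible controls, and for a control
   P the random variables  Qsum P = sum_{i=0}^M q_i  (total withdrawals) and
   WT P = terminal wealth W_T under control P. *)

definition EW_LS_obj ::
  "'w measure \<Rightarrow> ('c \<Rightarrow> 'w \<Rightarrow> real) \<Rightarrow> ('c \<Rightarrow> 'w \<Rightarrow> real) \<Rightarrow> real
   \<Rightarrow> real \<Rightarrow> real \<Rightarrow> 'c \<Rightarrow> real" where
  "EW_LS_obj M Qsum WT eps Wb kh P =
     (\<integral>\<omega>. Qsum P \<omega> + kh * min (WT P \<omega> - Wb) 0 + eps * WT P \<omega> \<partial>M)"

definition EW_ES_inner ::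
  "'w measure \<Rightarrow> ('c \<Rightarrow> 'w \<Rightarrow> real) \<Rightarrow> ('c \<Rightarrow> 'w \<Rightarrow> real) \<Rightarrow> real
   \<Rightarrow> real \<Rightarrow> real \<Rightarrow> real \<Rightarrow> 'c \<Rightarrow> real" where
  "EW_ES_inner M Qsum WT eps \<alpha> \<kappa> W' P =
     (\<integral>\<omega>. Qsum P \<omega> + \<kappa> * (W' + (1 / \<alpha>) * min (WT P \<omega> - W') 0) + eps * WT P \<omega> \<partial>M)"

definition EW_ES_obj ::
  "'w measure \<Rightarrow> ('c \<Rightarrow> 'w \<Rightarrow> real) \<Rightarrow> ('c \<Rightarrow> 'w \<Rightarrow> real) \<Rightarrow> real
   \<Rightarrow> real \<Rightarrow> real \<Rightarrow> 'c \<Rightarrow> real" where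
  "EW_ES_obj M Qsum WT eps \<alpha> \<kappa> P = (SUP W'. EW_ES_inner M Qsum WT eps \<alpha> \<kappa> W' P)"

definition solves :: "'c set \<Rightarrow> ('c \<Rightarrow> real) \<Rightarrow> 'c \<Rightarrow> bool" where
  "solves A J P \<longleftrightarrow> P \<in> A \<and> (\<forall>P'\<in>A. J P' \<le> J P)"

definition H_ES ::
  "'w measure \<Rightarrow> 'c set \<Rightarrow> ('c \<Rightarrow> 'w \<Rightarrow> real) \<Rightarrow> ('c \<Rightarrow> 'w \<Rightarrow> real) \<Rightarrow> real \<Rightarrow> 'c set" where
  "H_ES M A Qsum WT eps = {P. \<exists>\<alpha> \<kappa>. 0 < \<alpha> \<and> \<alpha> < 1 \<and> 0 < \<kappa> \<and>
                                   solves A (EW_ES_obj M Qsum WT eps \<alpha> \<kappa>) P}"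

definition H_LS ::
  "'w measure \<Rightarrow> 'c set \<Rightarrow> ('c \<Rightarrow> 'w \<Rightarrow> real) \<Rightarrow> ('c \<Rightarrow> 'w \<Rightarrow> real) \<Rightarrow> real \<Rightarrow> 'c set" where
  "H_LS M A Qsum WT eps = {P. \<exists>Wb kh. 0 < kh \<and> solves A (EW_LS_obj M Qsum WT eps Wb kh) P}"

end

theory Submission
  imports Defs
begin

lemma m_props:
  fixes M :: "'w measure" and X :: "'w \<Rightarrow> real"
  assumes ps: "prob_space M" and iX: "integrable M X"
  defines "m \<equiv> (\<lambda>W. \<integral>\<omega>. min (X \<omega> - W) 0 \<partial>M)"
  shows "\<And>W. integrable M (\<lambda>\<omega>. min (X \<omega> - W) 0)"
    and "\<And>W. m W \<le> 0" and "\<And>W. m W \<le> integral\<^sup>L M X - W"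
    and "continuous_on UNIV m"
proof -
  interpret prob_space M by (rule ps)
  show iM: "\<And>W. integrable M (\<lambda>\<omega>. min (X \<omega> - W) 0)"
    using iX by auto
  show "\<And>W. m W \<le> 0"
  proof -
    fix W
    have "m W \<le> (\<integral>\<omega>. 0 \<partial>M)" unfolding m_def
      by (rule integral_mono) (use iM in auto)
    then show "m W \<le> 0" by simp
  qed
  show "\<And>W. m W \<le> integral\<^sup>L M X - W"
  proof -
    fix W
    have "m W \<le> (\<integral>\<omega>. X \<omega> - W \<partial>M)" unfolding m_def
      by (rule integral_mono) (use iM iX in auto)
    also have "\<dots> = integral\<^sup>L M X - W"
      using iX by (simp add: prob_space)
    finally show "m W \<le> integral\<^sup>L M X - W" .
  qed
  have "1-lipschitz_on UNIV m"
  proof (rule lipschitz_onI)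
    fix x y :: real
    have "m x - m y = (\<integral>\<omega>. min (X \<omega> - x) 0 - min (X \<omega> - y) 0 \<partial>M)"
      unfolding m_def using iM by simp
    also have "\<bar>\<dots>\<bar> \<le> (\<integral>\<omega>. \<bar>min (X \<omega> - x) 0 - min (X \<omega> - y) 0\<bar> \<partial>M)"
      by (rule integral_abs_bound)
    also have "\<dots> \<le> (\<integral>\<omega>. \<bar>x - y\<bar> \<partial>M)"
      by (rule integral_mono) (use iM in auto)
    also have "\<dots> = \<bar>x - y\<bar>" by (simp add: prob_space)
    finally show "dist (m x) (m y) \<le> 1 * dist x y" by (simp add: dist_real_def)
  qed simp
  then show "continuous_on UNIV m" by (rule lipschitz_on_continuous_on)
qed

lemma attains:
  fixes M :: "'w measure" and Q X :: "'w \<Rightarrow> real" and eps :: real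
  assumes ps: "prob_space M" and iQ: "integrable M Q" and iX: "integrable M X"
    and a: "0 < \<alpha>" "\<alpha> < 1" and k: "0 < \<kappa>"
  defines "h \<equiv> (\<lambda>W. \<integral>\<omega>. Q \<omega> + \<kappa> * (W + (1 / \<alpha>) * min (X \<omega> - W) 0) + eps * X \<omega> \<partial>M)"
  shows "\<exists>W1. \<forall>W. h W \<le> h W1"
proof -
  interpret prob_space M by (rule ps)
  define m where "m = (\<lambda>W. \<integral>\<omega>. min (X \<omega> - W) 0 \<partial>M)"
  note mp = m_props[OF ps iX, folded m_def]
  define c where "c = integral\<^sup>L M Q + eps * integral\<^sup>L M X"
  have heq: "h W = c + \<kappa> * W + (\<kappa> / \<alpha>) * m W" for W
  proof -
    have "h W = (\<integral>\<omega>. (Q \<omega> + eps * X \<omega>) + (\<kappa> / \<alpha>) * min (X \<omega> - W) 0 + \<kappa> * W \<partial>M)"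
      unfolding h_def by (rule Bochner_Integration.integral_cong) (auto simp: algebra_simps)
    also have "\<dots> = (\<integral>\<omega>. (Q \<omega> + eps * X \<omega>) \<partial>M) + (\<kappa> / \<alpha>) * m W + \<kappa> * W"
      unfolding m_def using iQ iX mp(1)[of W] by (simp add: prob_space)
    also have "\<dots> = c + \<kappa> * W + (\<kappa> / \<alpha>) * m W"
      unfolding c_def using iQ iX by simp
    finally show ?thesis .
  qed
  have hcont: "continuous_on UNIV h"
    unfolding heq by (intro continuous_intros mp(4)[THEN continuous_on_subset]) auto
  define EXX where "EXX = integral\<^sup>L M X"
  define d where "d = \<kappa> / \<alpha> - \<kappa>"
  have d: "d > 0" unfolding d_def using a k by (simp add: field_simps)
  have b1: "h W \<le> c + \<kappa> * W" for W
  proof -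
    have "m W \<le> 0" using mp(2)[of W] unfolding m_def .
    then have "(\<kappa> / \<alpha>) * m W \<le> 0" using a k by (intro mult_nonneg_nonpos) auto
    then show ?thesis using heq[of W] by linarith
  qed
  have b2: "h W \<le> c + (\<kappa>/\<alpha>) * EXX - d * W" for W
  proof -
    have "(\<kappa> / \<alpha>) * m W \<le> (\<kappa> / \<alpha>) * (EXX - W)"
      using mp(3)[of W] a k unfolding EXX_def m_def by (intro mult_left_mono) auto
    moreover have "(\<kappa> / \<alpha>) * (EXX - W) = (\<kappa> / \<alpha>) * EXX - (\<kappa> / \<alpha>) * W"
      by (simp add: right_diff_distrib)
    moreover have "d * W = (\<kappa> / \<alpha>) * W - \<kappa> * W" unfolding d_def by (simp add: left_diff_distrib)
    ultimately show ?thesis using heq[of W] by linarith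
  qed
  define lo where "lo = min 0 ((h 0 - c) / \<kappa>)"
  define hi where "hi = max 0 ((c + (\<kappa>/\<alpha>) * EXX - h 0) / d)"
  have "lo \<le> hi" unfolding lo_def hi_def by simp
  then obtain W1 where W1: "W1 \<in> {lo..hi}" "\<forall>y\<in>{lo..hi}. h y \<le> h W1"
  proof -
    have "continuous_on {lo..hi} h" using hcont by (rule continuous_on_subset) simp
    moreover have "{lo..hi} \<noteq> {}" using \<open>lo \<le> hi\<close> by simp
    ultimately show ?thesis using continuous_attains_sup[of "{lo..hi}" h] that
      by (meson compact_Icc)
  qed
  have h0: "h 0 \<le> h W1" using W1 unfolding lo_def hi_def by auto
  show ?thesis
  proof (intro exI allI)
    fix W
    show "h W \<le> h W1"
    proof (cases "W < lo")
      case True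
      then have "W < (h 0 - c) / \<kappa>" unfolding lo_def by linarith
      then have "\<kappa> * W < h 0 - c" using k by (simp add: pos_less_divide_eq mult.commute)
      then show ?thesis using b1[of W] h0 by linarith
    next
      case F: False
      show ?thesis
      proof (cases "W > hi")
        case True
        then have "W > (c + (\<kappa>/\<alpha>) * EXX - h 0) / d" unfolding hi_def by linarith
        then have "d * W > c + (\<kappa>/\<alpha>) * EXX - h 0" using d
          by (simp add: pos_divide_less_eq mult.commute)
        then show ?thesis using b2[of W] h0 by linarith
      next
        case False
        then show ?thesis using F W1 by auto
      qed
    qed
  qed
qed

theorem corollary1:
  fixes M :: "'w measure" and A :: "'c set"
    and Qsum WT :: "'c \<Rightarrow> 'w \<Rightarrow> real" and eps :: real
  assumes "prob_space M"
    and "\<forall>P\<in>A. integrable M (Qsum P) \<and> integrable M (WT P)"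
    and "\<forall>\<alpha> \<kappa>. 0 < \<alpha> \<and> \<alpha> < 1 \<and> 0 < \<kappa> \<longrightarrow>
           (\<exists>Wst. \<forall>W'. (SUP P\<in>A. EW_ES_inner M Qsum WT eps \<alpha> \<kappa> W' P)
                        \<le> (SUP P\<in>A. EW_ES_inner M Qsum WT eps \<alpha> \<kappa> Wst P))"
  shows "H_ES M A Qsum WT eps \<subseteq> H_LS M A Qsum WT eps"
proof
  fix P assume "P \<in> H_ES M A Qsum WT eps"
  then obtain \<alpha> \<kappa> where a: "0 < \<alpha>" "\<alpha> < 1" and k: "0 < \<kappa>"
    and sol: "solves A (EW_ES_obj M Qsum WT eps \<alpha> \<kappa>) P"
    unfolding H_ES_def by blast
  interpret prob_space M by (rule assms(1))
  let ?h = "\<lambda>P W. EW_ES_inner M Qsum WT eps \<alpha> \<kappa> W P"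
  have att: "\<exists>W1. \<forall>W. ?h P' W \<le> ?h P' W1" if "P' \<in> A" for P'
    using attains[OF assms(1) _ _ a k, of "Qsum P'" "WT P'" eps] assms(2) that
    unfolding EW_ES_inner_def by blast
  have PA: "P \<in> A" and opt: "\<forall>P'\<in>A. EW_ES_obj M Qsum WT eps \<alpha> \<kappa> P' \<le> EW_ES_obj M Qsum WT eps \<alpha> \<kappa> P"
    using sol unfolding solves_def by auto
  obtain W1 where W1: "\<forall>W. ?h P W \<le> ?h P W1" using att[OF PA] by blast
  have objP: "EW_ES_obj M Qsum WT eps \<alpha> \<kappa> P = ?h P W1"
    unfolding EW_ES_obj_def using W1 by (intro cSup_eq_maximum) auto
  have le: "?h P' W1 \<le> ?h P W1" if P'A: "P' \<in> A" for P'
  proof -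
    obtain W2 where W2: "\<forall>W. ?h P' W \<le> ?h P' W2" using att[OF P'A] by blast
    have "?h P' W1 \<le> EW_ES_obj M Qsum WT eps \<alpha> \<kappa> P'"
      unfolding EW_ES_obj_def
      by (rule cSUP_upper) (use W2 in \<open>auto intro!: bdd_aboveI\<close>)
    also have "\<dots> \<le> ?h P W1" using opt that objP by auto
    finally show ?thesis .
  qed
  have LSeq: "EW_LS_obj M Qsum WT eps W1 (\<kappa>/\<alpha>) P' = ?h P' W1 - \<kappa> * W1" if "P' \<in> A" for P'
  proof -
    have iP: "integrable M (\<lambda>\<omega>. Qsum P' \<omega> + \<kappa> / \<alpha> * min (WT P' \<omega> - W1) 0 + eps * WT P' \<omega>)"
      using assms(2) that by auto
    have "?h P' W1 = (\<integral>\<omega>. (Qsum P' \<omega> + \<kappa> / \<alpha> * min (WT P' \<omega> - W1) 0 + eps * WT P' \<omega>) + \<kappa> * W1 \<partial>M)"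
      unfolding EW_ES_inner_def by (rule Bochner_Integration.integral_cong) (auto simp: algebra_simps)
    also have "\<dots> = EW_LS_obj M Qsum WT eps W1 (\<kappa>/\<alpha>) P' + \<kappa> * W1"
      unfolding EW_LS_obj_def using iP by (simp add: prob_space)
    finally show ?thesis by simp
  qed
  have "\<forall>P'\<in>A. EW_LS_obj M Qsum WT eps W1 (\<kappa>/\<alpha>) P' \<le> EW_LS_obj M Qsum WT eps W1 (\<kappa>/\<alpha>) P"
    using le LSeq PA by (metis diff_right_mono)
  moreover have "0 < \<kappa>/\<alpha>" using a k by simp
  ultimately show "P \<in> H_LS M A Qsum WT eps"
    unfolding H_LS_def solves_def using PA by blast
qed

end
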